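(* Let $(G,\mathcal F_\bullet G,\mathfrak R)$ be a filtered Rota–Baxter group. Then $(\mathsf{gr}\,G,\mathsf{gr}\,\mathfrak R)$ is a graded Rota–Baxter Lie ring; that is, $\mathsf{gr}\,\mathfrak R$ is an additive map satisfying $[\mathsf{gr}\mathfrak R(a),\mathsf{gr}\mathfrak R(b)]=\mathsf{gr}\mathfrak R\big([\mathsf{gr}\mathfrak R(a),b]+[a,\mathsf{gr}\mathfrak R(b)]+[a,b]\big)$ for all $a,b\in\mathsf{gr}\,G$, and $\mathsf{gr}\mathfrak R(\mathsf{gr}_nG)\subset\mathsf{gr}_nG$ for all $n\ge1$.
   Context: For a group $G$, write $(x,y)=xyx^{-1}y^{-1}$, and for subgroups $H,K$ let $(H,K)$ be the subgroup generated by $(x,y)$, $x\in H$, $y\in K$. A filtered group $(G,\mathcal F_\bullet G)$ is a group with subgroups $G=\mathcal F_1G\supset\mathcal F_2G\supset\cdots$ such that $(\mathcal F_nG,\mathcal F_mG)\subset\mathcal F_{n+m}G$ for all $n,m\ge1$; then each $\mathcal F_nG$ is normal and $\mathsf{gr}_nG=\mathcal F_nG/\mathcal F_{n+1}G$ is an abelian group, written additively: $\bar x+\bar y=\overline{xy}$. Let $\mathsf{gr}\,G=\bigoplus_{n\ge1}\mathsf{gr}_nG$, with the biadditive bracket determined by $[\bar x,\bar y]=\overline{(x,y)}\in\mathsf{gr}_{n+m}G$ for $x\in\mathcal F_nG$, $y\in\mathcal F_mG$; this is a graded Lie ring. A Rota–Baxter group is a group with a map $\mathfrak R$ satisfying $\mathfrak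 R(g)\mathfrak R(h)=\mathfrak R(g\mathfrak R(g)h\mathfrak R(g)^{-1})$; a filtered Rota–Baxter group $(G,\mathcal F_\bullet G,\mathfrak R)$ is a filtered group with a Rota–Baxter operator satisfying $\mathfrak R(\mathcal F_nG)\subset\mathcal F_nG$ for all $n$. The maps $\mathfrak R_n:\mathsf{gr}_nG\to\mathsf{gr}_nG$, $\mathfrak R_n(\bar x)=\overline{\mathfrak R(x)}$, are well-defined group homomorphisms, and $\mathsf{gr}\,\mathfrak R:\mathsf{gr}\,G\to\mathsf{gr}\,G$ is defined by $\mathsf{gr}\mathfrak R(a_1+\cdots+a_k)=\mathfrak R_{i_1}(a_1)+\cdots+\mathfrak R_{i_k}(a_k)$ for $a_j\in\mathsf{gr}_{i_j}G$. *)

theory Defs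
  imports "HOL-Algebra.Algebra"
begin

definition grp_comm :: "('a, 'b) monoid_scheme \<Rightarrow> 'a \<Rightarrow> 'a \<Rightarrow> 'a" where
  "grp_comm G x y = x \<otimes>\<^bsub>G\<^esub> y \<otimes>\<^bsub>G\<^esub> inv\<^bsub>G\<^esub> x \<otimes>\<^bsub>G\<^esub> inv\<^bsub>G\<^esub> y"

text \<open>Filtered group; the filtration is indexed by n \<ge> 1 (the value F 0 is irrelevant).\<close>
definition filtered_group :: "('a, 'b) monoid_scheme \<Rightarrow> (nat \<Rightarrow> 'a set) \<Rightarrow> bool" where
  "filtered_group G F \<longleftrightarrow> group G \<and> F 1 = carrier G \<and>
     (\<forall>n\<ge>1. subgroup (F n) G \<and> F (Suc n) \<subseteq> F n) \<and>
     (\<forall>n m. n \<ge> 1 \<longrightarrow> m \<ge> 1 \<longrightarrow>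
        generate G {grp_comm G x y | x y. x \<in> F n \<and> y \<in> F m} \<subseteq> F (n + m))"

definition rota_baxter :: "('a, 'b) monoid_scheme \<Rightarrow> ('a \<Rightarrow> 'a) \<Rightarrow> bool" where
  "rota_baxter G R \<longleftrightarrow> R \<in> carrier G \<rightarrow> carrier G \<and>
     (\<forall>g\<in>carrier G. \<forall>h\<in>carrier G.
        R g \<otimes>\<^bsub>G\<^esub> R h = R (g \<otimes>\<^bsub>G\<^esub> R g \<otimes>\<^bsub>G\<^esub> h \<otimes>\<^bsub>G\<^esub> inv\<^bsub>G\<^esub> (R g)))"

definition filtered_rota_baxter ::
  "('a, 'b) monoid_scheme \<Rightarrow> (nat \<Rightarrow> 'a set) \<Rightarrow> ('a \<Rightarrow> 'a) \<Rightarrow> bool" where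
  "filtered_rota_baxter G F R \<longleftrightarrow> filtered_group G F \<and> rota_baxter G R \<and>
     (\<forall>n\<ge>1. R ` F n \<subseteq> F n)"

definition gr_n :: "('a, 'b) monoid_scheme \<Rightarrow> (nat \<Rightarrow> 'a set) \<Rightarrow> nat \<Rightarrow> 'a set set" where
  "gr_n G F n = {F (Suc n) #>\<^bsub>G\<^esub> x | x. x \<in> F n}"

text \<open>gr G = direct sum of the gr_n G (n \<ge> 1): finitely supported families of cosets.
  The zero of degree n is the coset F (Suc n); the (unused) degree-0 slot is fixed to be F 1.\<close>
definition gr_zero :: "(nat \<Rightarrow> 'a set) \<Rightarrow> nat \<Rightarrow> 'a set" where
  "gr_zero F = (\<lambda>n. F (Suc n))"

definition gr :: "('a, 'b) monoid_scheme \<Rightarrow> (nat \<Rightarrow> 'a set) \<Rightarrow> (nat \<Rightarrow> 'a set) set" where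
  "gr G F = {a. a 0 = F 1 \<and> (\<forall>n\<ge>1. a n \<in> gr_n G F n) \<and> finite {n. a n \<noteq> F (Suc n)}}"

text \<open>The homogeneous elements of degree n, i.e. the copy of gr_n G inside gr G.\<close>
definition gr_deg :: "('a, 'b) monoid_scheme \<Rightarrow> (nat \<Rightarrow> 'a set) \<Rightarrow> nat \<Rightarrow> (nat \<Rightarrow> 'a set) set" where
  "gr_deg G F n = {a \<in> gr G F. \<forall>k. k \<noteq> n \<longrightarrow> a k = F (Suc k)}"

definition gr_add :: "('a, 'b) monoid_scheme \<Rightarrow> (nat \<Rightarrow> 'a set) \<Rightarrow> (nat \<Rightarrow> 'a set) \<Rightarrow> nat \<Rightarrow> 'a set" where
  "gr_add G a b = (\<lambda>n. a n <#>\<^bsub>G\<^esub> b n)"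

definition rep :: "'a set \<Rightarrow> 'a" where
  "rep C = (SOME x. x \<in> C)"

text \<open>Bracket: biadditive extension of [overline x, overline y] = overline{(x,y)};
  the degree-n component of [a,b] is the sum over i + j = n (i, j \<ge> 1) of [a_i, b_j].\<close>
definition gr_bracket :: "('a, 'b) monoid_scheme \<Rightarrow> (nat \<Rightarrow> 'a set) \<Rightarrow>
    (nat \<Rightarrow> 'a set) \<Rightarrow> (nat \<Rightarrow> 'a set) \<Rightarrow> nat \<Rightarrow> 'a set" where
  "gr_bracket G F a b = (\<lambda>n. F (Suc n) #>\<^bsub>G\<^esub>
      foldr (\<lambda>x y. x \<otimes>\<^bsub>G\<^esub> y)
        (map (\<lambda>i. grp_comm G (rep (a i)) (rep (b (n - i)))) [1..<n]) \<one>\<^bsub>G\<^esub>)"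

definition gr_R :: "('a, 'b) monoid_scheme \<Rightarrow> (nat \<Rightarrow> 'a set) \<Rightarrow> ('a \<Rightarrow> 'a) \<Rightarrow>
    (nat \<Rightarrow> 'a set) \<Rightarrow> nat \<Rightarrow> 'a set" where
  "gr_R G F R a = (\<lambda>n. F (Suc n) #>\<^bsub>G\<^esub> R (rep (a n)))"

end

theory Submission
  imports Defs
begin



context group begin

lemma gl_cancel1 [simp]: "x \<in> carrier G \<Longrightarrow> y \<in> carrier G \<Longrightarrow> inv x \<otimes> (x \<otimes> y) = y"
  by (simp add: m_assoc [symmetric])
lemma gl_cancel2 [simp]: "x \<in> carrier G \<Longrightarrow> y \<in> carrier G \<Longrightarrow> x \<otimes> (inv x \<otimes> y) = y"
  by (simp add: m_assoc [symmetric])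

lemma comm_closed [simp]: "x \<in> carrier G \<Longrightarrow> y \<in> carrier G \<Longrightarrow> grp_comm G x y \<in> carrier G"
  by (simp add: grp_comm_def)

lemma comm_swap: "x \<in> carrier G \<Longrightarrow> y \<in> carrier G \<Longrightarrow> grp_comm G x y = inv (grp_comm G y x)"
  by (simp add: grp_comm_def inv_mult_group m_assoc)

lemma GL1:
  assumes k: "k \<in> carrier G" and x: "x \<in> carrier G" and y: "y \<in> carrier G"
    and ky: "k \<otimes> y = y \<otimes> k" and kc: "k \<otimes> grp_comm G x y = grp_comm G x y \<otimes> k"
  shows "grp_comm G (k \<otimes> x) y = grp_comm G x y"
proof -
  let ?c = "grp_comm G x y"
  have e1: "x \<otimes> (y \<otimes> inv x) = ?c \<otimes> y" using x y by (simp add: grp_comm_def m_assoc)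
  have "grp_comm G (k \<otimes> x) y = k \<otimes> (x \<otimes> (y \<otimes> inv x)) \<otimes> (inv k \<otimes> inv y)"
    using k x y by (simp add: grp_comm_def inv_mult_group m_assoc)
  also have "\<dots> = (k \<otimes> ?c) \<otimes> y \<otimes> (inv k \<otimes> inv y)" using k x y by (simp add: e1 m_assoc)
  also have "\<dots> = ?c \<otimes> ((k \<otimes> y) \<otimes> (inv k \<otimes> inv y))" using k x y by (simp add: kc m_assoc)
  also have "\<dots> = ?c \<otimes> ((y \<otimes> k) \<otimes> (inv k \<otimes> inv y))" by (simp add: ky)
  also have "\<dots> = ?c" using k x y by (simp add: m_assoc)
  finally show ?thesis .
qed

definition central :: "'a \<Rightarrow> bool" where
  "central z \<longleftrightarrow> z \<in> carrier G \<and> (\<forall>g\<in>carrier G. z \<otimes> g = g \<otimes> z)"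

lemma GL2:
  assumes uu: "uu \<in> carrier G" and vv: "vv \<in> carrier G" and cc: "central cc"
  shows "uu \<otimes> cc \<otimes> inv vv \<otimes> inv cc = uu \<otimes> inv vv"
proof -
  have Cc: "cc \<in> carrier G" using cc by (simp add: central_def)
  have "cc \<otimes> inv vv = inv vv \<otimes> cc" using cc vv by (simp add: central_def)
  then have "uu \<otimes> cc \<otimes> inv vv \<otimes> inv cc = uu \<otimes> inv vv \<otimes> (cc \<otimes> inv cc)"
    using uu vv Cc by (simp add: m_assoc)
  then show ?thesis using uu vv Cc by simp
qed

lemma GL3:
  assumes xx: "xx \<in> carrier G" and yy: "yy \<in> carrier G" and aa: "aa \<in> carrier G" and bb: "bb \<in> carrier G"
    and cc1: "central (grp_comm G aa yy)" and cc2: "central (grp_comm G xx bb)"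
  shows "(xx \<otimes> aa \<otimes> yy \<otimes> inv aa) \<otimes> inv (yy \<otimes> bb \<otimes> xx \<otimes> inv bb)
     = grp_comm G aa yy \<otimes> grp_comm G xx bb \<otimes> grp_comm G xx yy"
proof -
  let ?c1 = "grp_comm G aa yy" and ?c2 = "grp_comm G xx bb"
  have c1: "?c1 \<in> carrier G" and c2: "?c2 \<in> carrier G" using xx yy aa bb by auto
  have e1: "aa \<otimes> (yy \<otimes> inv aa) = ?c1 \<otimes> yy" using aa yy by (simp add: grp_comm_def m_assoc)
  have e2: "bb \<otimes> (inv xx \<otimes> inv bb) = inv xx \<otimes> ?c2" using xx bb by (simp add: grp_comm_def m_assoc)
  have "(xx \<otimes> aa \<otimes> yy \<otimes> inv aa) \<otimes> inv (yy \<otimes> bb \<otimes> xx \<otimes> inv bb)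
      = xx \<otimes> (aa \<otimes> (yy \<otimes> inv aa)) \<otimes> (bb \<otimes> (inv xx \<otimes> inv bb)) \<otimes> inv yy"
    using xx yy aa bb by (simp add: inv_mult_group m_assoc)
  also have "\<dots> = xx \<otimes> (?c1 \<otimes> yy) \<otimes> (inv xx \<otimes> ?c2) \<otimes> inv yy" by (simp add: e1 e2)
  also have "\<dots> = ?c1 \<otimes> (xx \<otimes> yy \<otimes> inv xx) \<otimes> ?c2 \<otimes> inv yy"
  proof -
    have "xx \<otimes> ?c1 = ?c1 \<otimes> xx" using cc1 xx by (simp add: central_def)
    then show ?thesis using xx yy c1 c2 by (simp add: m_assoc flip: m_assoc[of xx ?c1])
  qed
  also have "\<dots> = ?c1 \<otimes> ?c2 \<otimes> (xx \<otimes> yy \<otimes> inv xx \<otimes> inv yy)"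
  proof -
    have "(xx \<otimes> yy \<otimes> inv xx) \<otimes> ?c2 = ?c2 \<otimes> (xx \<otimes> yy \<otimes> inv xx)" using cc2 xx yy by (simp add: central_def)
    then show ?thesis using xx yy c1 c2 by (simp add: m_assoc)
  qed
  finally show ?thesis by (simp add: grp_comm_def)
qed

lemma GL4:
  assumes "\<forall>i\<in>set l. f i \<in> carrier G \<and> central (g i) \<and> central (h i)"
  shows "foldr (\<lambda>x y. x \<otimes> y) (map (\<lambda>i. f i \<otimes> g i \<otimes> h i) l) \<one>
    = foldr (\<lambda>x y. x \<otimes> y) (map f l) \<one> \<otimes> foldr (\<lambda>x y. x \<otimes> y) (map g l) \<one>
      \<otimes> foldr (\<lambda>x y. x \<otimes> y) (map h l) \<one>"
  using assms
proof (induction l)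
  case Nil
  then show ?case by simp
next
  case (Cons a l)
  let ?F = "foldr (\<lambda>x y. x \<otimes> y) (map f l) \<one>"
  let ?G = "foldr (\<lambda>x y. x \<otimes> y) (map g l) \<one>"
  let ?H = "foldr (\<lambda>x y. x \<otimes> y) (map h l) \<one>"
  have cl: "\<And>k. \<forall>i\<in>set l. k i \<in> carrier G \<Longrightarrow> foldr (\<lambda>x y. x \<otimes> y) (map k l) \<one> \<in> carrier G"
    by (induction l) auto
  have F: "?F \<in> carrier G" using Cons.prems by (intro cl) auto
  have Gc: "?G \<in> carrier G" using Cons.prems by (intro cl) (auto simp: central_def)
  have H: "?H \<in> carrier G" using Cons.prems by (intro cl) (auto simp: central_def)
  have fa: "f a \<in> carrier G" and ga: "g a \<in> carrier G" and ha: "h a \<in> carrier G"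
    and gc: "central (g a)" and hc: "central (h a)" using Cons.prems by (auto simp: central_def)
  have IH: "foldr (\<lambda>x y. x \<otimes> y) (map (\<lambda>i. f i \<otimes> g i \<otimes> h i) l) \<one> = ?F \<otimes> ?G \<otimes> ?H"
    using Cons by simp
  have "(f a \<otimes> g a \<otimes> h a) \<otimes> (?F \<otimes> ?G \<otimes> ?H) = f a \<otimes> g a \<otimes> (h a \<otimes> (?F \<otimes> ?G)) \<otimes> ?H"
    using fa ga ha F Gc H by (simp add: m_assoc)
  also have "\<dots> = f a \<otimes> g a \<otimes> ((?F \<otimes> ?G) \<otimes> h a) \<otimes> ?H"
    using hc F Gc by (simp add: central_def)
  also have "\<dots> = f a \<otimes> (g a \<otimes> ?F) \<otimes> ?G \<otimes> h a \<otimes> ?H"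
    using fa ga ha F Gc H by (simp add: m_assoc)
  also have "\<dots> = f a \<otimes> (?F \<otimes> g a) \<otimes> ?G \<otimes> h a \<otimes> ?H"
    using gc F by (simp add: central_def)
  also have "\<dots> = (f a \<otimes> ?F) \<otimes> (g a \<otimes> ?G) \<otimes> (h a \<otimes> ?H)"
    using fa ga ha F Gc H by (simp add: m_assoc)
  finally show ?case using IH by simp
qed

end


locale frb = group +
  fixes F :: "nat \<Rightarrow> 'a set" and R :: "'a \<Rightarrow> 'a"
  assumes frb: "filtered_rota_baxter G F R"
begin
lemma F1: "F 1 = carrier G" using frb by (simp add: filtered_rota_baxter_def filtered_group_def)
lemma sub: "1 \<le> n \<Longrightarrow> subgroup (F n) G" using frb by (simp add: filtered_rota_baxter_def filtered_group_def)
lemma subS: "subgroup (F (Suc n)) G" using sub by simp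
lemma Fsub: "1 \<le> n \<Longrightarrow> F n \<subseteq> carrier G" using sub subgroup.subset by blast
lemma FsubS: "F (Suc n) \<subseteq> carrier G" using Fsub by simp
lemma Fmem: "1 \<le> n \<Longrightarrow> x \<in> F n \<Longrightarrow> x \<in> carrier G" using Fsub by blast
lemma FmemS: "x \<in> F (Suc n) \<Longrightarrow> x \<in> carrier G" using FsubS by blast
lemma monoS: "1 \<le> n \<Longrightarrow> F (Suc n) \<subseteq> F n" using frb by (simp add: filtered_rota_baxter_def filtered_group_def)
lemma mono: assumes n1: "1 \<le> n" and nm: "n \<le> m" shows "F m \<subseteq> F n"
  using nm
proof (induction m rule: dec_induct)
  case base then show ?case by simp
next
  case (step m) then show ?case using monoS[of m] n1 by auto
qed
lemma comm_mem: "1 \<le> n \<Longrightarrow> 1 \<le> m \<Longrightarrow> x \<in> F n \<Longrightarrow> y \<in> F m \<Longrightarrow> grp_comm G x y \<in> F (n + m)"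
proof -
  assume a: "1 \<le> n" "1 \<le> m" "x \<in> F n" "y \<in> F m"
  have all: "\<forall>n m. n \<ge> 1 \<longrightarrow> m \<ge> 1 \<longrightarrow>
        generate G {grp_comm G x y | x y. x \<in> F n \<and> y \<in> F m} \<subseteq> F (n + m)"
    using frb unfolding filtered_rota_baxter_def filtered_group_def by (elim conjE) assumption
  have "generate G {grp_comm G x y | x y. x \<in> F n \<and> y \<in> F m} \<subseteq> F (n + m)"
    using all[rule_format, OF a(1) a(2)] .
  moreover have "grp_comm G x y \<in> generate G {grp_comm G x y | x y. x \<in> F n \<and> y \<in> F m}"
    by (rule generate.incl) (use a in blast)
  ultimately show ?thesis by (rule subsetD)
qed
lemma normal: "1 \<le> n \<Longrightarrow> F n \<lhd> G"
proof -
  assume n: "1 \<le> n"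
  show ?thesis unfolding normal_inv_iff
  proof (intro conjI ballI)
    show "subgroup (F n) G" using sub n .
    fix x h assume x: "x \<in> carrier G" and h: "h \<in> F n"
    have hc: "h \<in> carrier G" using Fmem n h .
    have x1: "x \<in> F 1" using x F1 by simp
    have "grp_comm G x h \<in> F (1 + n)" using comm_mem[OF _ n x1 h] by simp
    moreover have "F (1 + n) \<subseteq> F n" using mono[of n "1+n"] n by simp
    ultimately have "grp_comm G x h \<in> F n" by (rule rev_subsetD)
    then have "grp_comm G x h \<otimes> h \<in> F n" using h by (rule subgroup.m_closed[OF sub[OF n]])
    moreover have "grp_comm G x h \<otimes> h = x \<otimes> h \<otimes> inv x" using x hc by (simp add: grp_comm_def m_assoc)
    ultimately show "x \<otimes> h \<otimes> inv x \<in> F n" by simp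
  qed
qed
lemma normalS: "F (Suc n) \<lhd> G" using normal by simp

lemma R_carr: "x \<in> carrier G \<Longrightarrow> R x \<in> carrier G"
  using frb by (auto simp: filtered_rota_baxter_def rota_baxter_def)
lemma R_F: "1 \<le> n \<Longrightarrow> x \<in> F n \<Longrightarrow> R x \<in> F n"
  using frb by (auto simp: filtered_rota_baxter_def)
lemma R_FS: "x \<in> F (Suc n) \<Longrightarrow> R x \<in> F (Suc n)" using R_F by simp
lemma RB: "x \<in> carrier G \<Longrightarrow> y \<in> carrier G \<Longrightarrow> R x \<otimes> R y = R (x \<otimes> R x \<otimes> y \<otimes> inv (R x))"
  using frb by (auto simp: filtered_rota_baxter_def rota_baxter_def)

lemma R_one: "R \<one> = \<one>"
proof -
  have "R \<one> \<otimes> R \<one> = R \<one>" using RB[of \<one> \<one>] R_carr by (simp add: m_assoc)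
  then show ?thesis using R_carr[of \<one>] by (metis l_cancel_one one_closed)
qed

lemma R_inv: "g \<in> carrier G \<Longrightarrow> R (inv (R g) \<otimes> inv g \<otimes> R g) = inv (R g)"
proof -
  assume g: "g \<in> carrier G"
  have Rg: "R g \<in> carrier G" using R_carr g .
  let ?h = "inv (R g) \<otimes> inv g \<otimes> R g"
  have h: "?h \<in> carrier G" using g Rg by simp
  have "R g \<otimes> R ?h = R (g \<otimes> R g \<otimes> ?h \<otimes> inv (R g))" using RB g h by simp
  also have "g \<otimes> R g \<otimes> ?h \<otimes> inv (R g) = \<one>" using g Rg by (simp add: m_assoc)
  finally have "R g \<otimes> R ?h = \<one>" using R_one by simp
  then show ?thesis using Rg h R_carr[OF h]
    by (metis inv_equality inv_comm)
qed

lemma RB_comm: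
  assumes x: "x \<in> carrier G" and y: "y \<in> carrier G"
  defines "u \<equiv> x \<otimes> R x \<otimes> y \<otimes> inv (R x)" and "v \<equiv> y \<otimes> R y \<otimes> x \<otimes> inv (R y)"
    and "c \<equiv> grp_comm G (R x) (R y)"
  shows "c = R (u \<otimes> c \<otimes> inv v \<otimes> inv c)"
proof -
  have Rx: "R x \<in> carrier G" and Ry: "R y \<in> carrier G" using R_carr x y by auto
  have u: "u \<in> carrier G" and v: "v \<in> carrier G" using x y Rx Ry by (auto simp: u_def v_def)
  have Ru: "R u \<in> carrier G" and Rv: "R v \<in> carrier G" using R_carr u v by auto
  have eu: "R x \<otimes> R y = R u" using RB x y by (simp add: u_def)
  have ev: "R y \<otimes> R x = R v" using RB x y by (simp add: v_def)
  have cc: "c = R u \<otimes> inv (R v)"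
    using Rx Ry by (simp add: c_def grp_comm_def flip: eu ev add: inv_mult_group m_assoc)
  have ic: "inv c = R v \<otimes> inv (R u)" using cc Ru Rv by (simp add: inv_mult_group)
  let ?h = "inv (R v) \<otimes> inv v \<otimes> R v"
  have h: "?h \<in> carrier G" using v Rv by simp
  have "c = R u \<otimes> R ?h" using cc R_inv[OF v] by simp
  also have "\<dots> = R (u \<otimes> R u \<otimes> ?h \<otimes> inv (R u))" using RB u h by simp
  also have "u \<otimes> R u \<otimes> ?h \<otimes> inv (R u) = u \<otimes> (R u \<otimes> inv (R v)) \<otimes> inv v \<otimes> (R v \<otimes> inv (R u))"
    using u v Ru Rv by (simp add: m_assoc)
  also have "\<dots> = u \<otimes> c \<otimes> inv v \<otimes> inv c" using cc ic by simp
  finally show ?thesis .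
qed

end


context frb begin

definition P :: "nat \<Rightarrow> 'a \<Rightarrow> 'a set" where "P n x = F (Suc n) #> x"
definition Q :: "nat \<Rightarrow> 'a set monoid" where "Q n = G Mod F (Suc n)"

lemma Qgrp: "group (Q n)"
  unfolding Q_def using normal.factorgroup_is_group[OF normalS] .
lemma P_hom: "P n \<in> hom G (Q n)"
  unfolding Q_def P_def using normal.r_coset_hom_Mod[OF normalS] .
lemma P_ghom: "group_hom G (Q n) (P n)"
  using P_hom Qgrp by (simp add: group_hom_def group_hom_axioms_def is_group)
lemma P_mult: "x \<in> carrier G \<Longrightarrow> y \<in> carrier G \<Longrightarrow> P n (x \<otimes> y) = P n x \<otimes>\<^bsub>Q n\<^esub> P n y"
  using group_hom.hom_mult[OF P_ghom] by simp
lemma P_mult': "x \<in> carrier G \<Longrightarrow> y \<in> carrier G \<Longrightarrow> P n x <#> P n y = P n (x \<otimes> y)"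
  unfolding P_def using normal.rcos_sum[OF normalS] by simp
lemma P_carr: "x \<in> carrier G \<Longrightarrow> P n x \<in> carrier (Q n)"
  using P_hom by (auto simp: hom_def)
lemma P_inv: "x \<in> carrier G \<Longrightarrow> P n (inv x) = inv\<^bsub>Q n\<^esub> (P n x)"
  using group_hom.hom_inv[OF P_ghom] by simp
lemma P_one: "P n \<one> = \<one>\<^bsub>Q n\<^esub>"
  using group_hom.hom_one[OF P_ghom] by simp
lemma P_commG: "x \<in> carrier G \<Longrightarrow> y \<in> carrier G \<Longrightarrow> P n (grp_comm G x y) = grp_comm (Q n) (P n x) (P n y)"
  by (simp add: grp_comm_def P_mult P_inv)
lemma P_eq_iff: "x \<in> carrier G \<Longrightarrow> y \<in> carrier G \<Longrightarrow> P n x = P n y \<longleftrightarrow> x \<otimes> inv y \<in> F (Suc n)"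
proof
  assume x: "x \<in> carrier G" and y: "y \<in> carrier G" and e: "P n x = P n y"
  have "x \<in> F (Suc n) #> y" using rcos_self[OF x subS[of n]] e by (simp add: P_def)
  then show "x \<otimes> inv y \<in> F (Suc n)" using subgroup.rcos_module_imp[OF subS is_group y] by simp
next
  assume x: "x \<in> carrier G" and y: "y \<in> carrier G" and e: "x \<otimes> inv y \<in> F (Suc n)"
  have "x \<in> F (Suc n) #> y" using subgroup.rcos_module_rev[OF subS is_group y x e] .
  then show "P n x = P n y" unfolding P_def using repr_independence[OF _ y subS] by simp
qed
lemma P_triv: "k \<in> F (Suc n) \<Longrightarrow> P n k = \<one>\<^bsub>Q n\<^esub>"
  unfolding P_def Q_def using subgroup.rcos_const[OF subS is_group] by simp
lemma P_commute:
  assumes x: "x \<in> carrier G" and y: "y \<in> carrier G" and c: "grp_comm G x y \<in> F (Suc n)"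
  shows "P n x \<otimes>\<^bsub>Q n\<^esub> P n y = P n y \<otimes>\<^bsub>Q n\<^esub> P n x"
proof -
  have "(x \<otimes> y) \<otimes> inv (y \<otimes> x) = grp_comm G x y" using x y by (simp add: grp_comm_def inv_mult_group m_assoc)
  then have "P n (x \<otimes> y) = P n (y \<otimes> x)" using P_eq_iff[of "x \<otimes> y" "y \<otimes> x" n] x y c by simp
  then show ?thesis using x y by (simp add: P_mult)
qed
lemma Q_surj: "xq \<in> carrier (Q n) \<Longrightarrow> \<exists>g\<in>carrier G. xq = P n g"
  unfolding Q_def P_def carrier_FactGroup by blast
lemma P_central:
  assumes n: "1 \<le> n" and c: "c \<in> F n"
  shows "group.central (Q n) (P n c)"
proof -
  have cc: "c \<in> carrier G" using Fmem n c .
  show ?thesis unfolding group.central_def[OF Qgrp]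
  proof (intro conjI ballI)
    show "P n c \<in> carrier (Q n)" using P_carr cc .
    fix xq assume "xq \<in> carrier (Q n)"
    then obtain g where g: "g \<in> carrier G" "xq = P n g" using Q_surj by blast
    have g1: "g \<in> F 1" using g F1 by simp
    have "grp_comm G c g \<in> F (n + 1)" using comm_mem[OF n _ c g1] by simp
    then have "grp_comm G c g \<in> F (Suc n)" by simp
    then show "P n c \<otimes>\<^bsub>Q n\<^esub> xq = xq \<otimes>\<^bsub>Q n\<^esub> P n c" using P_commute[OF cc g(1)] g(2) by simp
  qed
qed

lemma L1:
  assumes x: "x \<in> carrier G" and y: "y \<in> carrier G" and e: "P n x = P n y"
  shows "P n (R x) = P n (R y)"
proof -
  let ?H = "F (Suc n)"
  have k: "x \<otimes> inv y \<in> ?H" using P_eq_iff x y e by blast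
  have nrm: "\<And>g h. g \<in> carrier G \<Longrightarrow> h \<in> ?H \<Longrightarrow> g \<otimes> h \<otimes> inv g \<in> ?H"
    using normalS[of n] unfolding normal_inv_iff by blast
  have Ry: "R y \<in> carrier G" using R_carr y .
  have k2: "inv y \<otimes> (x \<otimes> inv y) \<otimes> inv (inv y) \<in> ?H" using nrm[OF inv_closed[OF y] k] .
  have k3: "inv y \<otimes> x \<in> ?H" using k2 x y by (simp add: m_assoc)
  let ?h = "inv (R y) \<otimes> (inv y \<otimes> x) \<otimes> R y"
  have h0: "inv (R y) \<otimes> (inv y \<otimes> x) \<otimes> inv (inv (R y)) \<in> ?H" using nrm[OF inv_closed[OF Ry] k3] .
  have h: "?h \<in> ?H" using h0 Ry by simp
  have hc: "?h \<in> carrier G" using FmemS h .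
  have "R y \<otimes> R ?h = R (y \<otimes> R y \<otimes> ?h \<otimes> inv (R y))" using RB y hc by simp
  also have "y \<otimes> R y \<otimes> ?h \<otimes> inv (R y) = x" using x y Ry by (simp add: m_assoc)
  finally have e2: "R y \<otimes> R ?h = R x" .
  have "P n (R y \<otimes> R ?h) = P n (R y) \<otimes>\<^bsub>Q n\<^esub> P n (R ?h)"
    using P_mult Ry R_carr[OF hc] .
  then have "P n (R x) = P n (R y) \<otimes>\<^bsub>Q n\<^esub> P n (R ?h)" by (simp only: e2)
  also have "P n (R ?h) = \<one>\<^bsub>Q n\<^esub>" using P_triv R_FS h by blast
  finally show ?thesis using monoid.r_one[OF group.is_monoid[OF Qgrp] P_carr[OF Ry]] by simp
qed

lemma L2:
  assumes n: "1 \<le> n" and x: "x \<in> carrier G" and y: "y \<in> F n"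
  shows "P n (R (x \<otimes> y)) = P n (R x) \<otimes>\<^bsub>Q n\<^esub> P n (R y)"
proof -
  have yc: "y \<in> carrier G" using Fmem n y .
  have Rx: "R x \<in> carrier G" using R_carr x .
  have Rx1: "R x \<in> F 1" using Rx F1 by simp
  have "grp_comm G (R x) y \<in> F (1 + n)" using comm_mem[OF _ n Rx1 y] by simp
  then have c: "grp_comm G (R x) y \<in> F (Suc n)" by simp
  have nrm: "\<And>g h. g \<in> carrier G \<Longrightarrow> h \<in> F (Suc n) \<Longrightarrow> g \<otimes> h \<otimes> inv g \<in> F (Suc n)"
    using normalS[of n] unfolding normal_inv_iff by blast
  have u: "x \<otimes> R x \<otimes> y \<otimes> inv (R x) \<in> carrier G" using x Rx yc by simp
  have xy: "x \<otimes> y \<in> carrier G" using x yc by simp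
  have "(x \<otimes> R x \<otimes> y \<otimes> inv (R x)) \<otimes> inv (x \<otimes> y) = x \<otimes> (grp_comm G (R x) y) \<otimes> inv x"
    using x yc Rx by (simp add: grp_comm_def inv_mult_group m_assoc)
  also have "\<dots> \<in> F (Suc n)" using nrm[OF x c] .
  finally have "P n (x \<otimes> R x \<otimes> y \<otimes> inv (R x)) = P n (x \<otimes> y)"
    using P_eq_iff[OF u xy] by simp
  then have e: "P n (R (x \<otimes> R x \<otimes> y \<otimes> inv (R x))) = P n (R (x \<otimes> y))"
    using L1[OF u xy] by simp
  have "P n (R x \<otimes> R y) = P n (R x) \<otimes>\<^bsub>Q n\<^esub> P n (R y)"
    using P_mult Rx R_carr[OF yc] .
  then show ?thesis using RB[OF x yc] e by simp
qed

end


context frb begin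

lemma L3a:
  assumes i: "1 \<le> i" and j: "1 \<le> j" and x: "x \<in> F i" and x': "x' \<in> carrier G"
    and k: "x' \<otimes> inv x \<in> F (Suc i)" and y: "y \<in> F j"
  shows "P (i+j) (grp_comm G x' y) = P (i+j) (grp_comm G x y)"
proof -
  let ?k = "x' \<otimes> inv x"
  have xc: "x \<in> carrier G" using Fmem i x .
  have yc: "y \<in> carrier G" using Fmem j y .
  have kc: "?k \<in> carrier G" using xc x' by simp
  have xk: "x' = ?k \<otimes> x" using xc x' by (simp add: m_assoc)
  have "grp_comm G ?k y \<in> F (Suc i + j)" using comm_mem[OF _ j k y] by simp
  then have "grp_comm G ?k y \<in> F (Suc (i + j))" by simp
  then have c1: "P (i+j) ?k \<otimes>\<^bsub>Q (i+j)\<^esub> P (i+j) y = P (i+j) y \<otimes>\<^bsub>Q (i+j)\<^esub> P (i+j) ?k"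
    using P_commute[OF kc yc] by simp
  have cxy: "grp_comm G x y \<in> F (i + j)" using comm_mem[OF i j x y] .
  have ce: "group.central (Q (i+j)) (P (i+j) (grp_comm G x y))" using P_central[OF _ cxy] i by simp
  have c2: "P (i+j) ?k \<otimes>\<^bsub>Q (i+j)\<^esub> grp_comm (Q (i+j)) (P (i+j) x) (P (i+j) y)
     = grp_comm (Q (i+j)) (P (i+j) x) (P (i+j) y) \<otimes>\<^bsub>Q (i+j)\<^esub> P (i+j) ?k"
    using ce P_carr[OF kc] unfolding group.central_def[OF Qgrp] P_commG[OF xc yc] by simp
  have "P (i+j) (grp_comm G x' y) = grp_comm (Q (i+j)) (P (i+j) ?k \<otimes>\<^bsub>Q (i+j)\<^esub> P (i+j) x) (P (i+j) y)"
    using xk kc xc yc by (metis P_commG P_mult m_closed)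
  also have "\<dots> = grp_comm (Q (i+j)) (P (i+j) x) (P (i+j) y)"
    by (rule group.GL1[OF Qgrp P_carr[OF kc] P_carr[OF xc] P_carr[OF yc] c1 c2])
  also have "\<dots> = P (i+j) (grp_comm G x y)" using P_commG[OF xc yc] by simp
  finally show ?thesis .
qed

lemma L3b:
  assumes i: "1 \<le> i" and j: "1 \<le> j" and x: "x \<in> F i" and y: "y \<in> F j" and y': "y' \<in> carrier G"
    and k: "y' \<otimes> inv y \<in> F (Suc j)"
  shows "P (i+j) (grp_comm G x y') = P (i+j) (grp_comm G x y)"
proof -
  have xc: "x \<in> carrier G" using Fmem i x .
  have yc: "y \<in> carrier G" using Fmem j y .
  have "P (j+i) (grp_comm G y' x) = P (j+i) (grp_comm G y x)" using L3a[OF j i y y' k x] .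
  then have e: "P (i+j) (grp_comm G y' x) = P (i+j) (grp_comm G y x)" by (simp add: add.commute)
  have "P (i+j) (grp_comm G x y') = P (i+j) (inv (grp_comm G y' x))" by (simp only: comm_swap[OF xc y'])
  also have "\<dots> = inv\<^bsub>Q (i+j)\<^esub> P (i+j) (grp_comm G y' x)" using P_inv xc y' by simp
  also have "\<dots> = inv\<^bsub>Q (i+j)\<^esub> P (i+j) (grp_comm G y x)" using e by simp
  also have "\<dots> = P (i+j) (inv (grp_comm G y x))" using P_inv xc yc by simp
  also have "\<dots> = P (i+j) (grp_comm G x y)" by (simp only: comm_swap[OF xc yc])
  finally show ?thesis .
qed

lemma L3:
  assumes i: "1 \<le> i" and j: "1 \<le> j" and x: "x \<in> F i" and x': "x' \<in> F i" and y: "y \<in> F j" and y': "y' \<in> F j"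
    and kx: "x' \<otimes> inv x \<in> F (Suc i)" and ky: "y' \<otimes> inv y \<in> F (Suc j)"
  shows "P (i+j) (grp_comm G x' y') = P (i+j) (grp_comm G x y)"
  using L3b[OF i j x' y Fmem[OF j y'] ky] L3a[OF i j x Fmem[OF i x'] kx y] by simp


lemma L4:
  assumes i: "1 \<le> i" and j: "1 \<le> j" and x: "x \<in> F i" and y: "y \<in> F j"
  shows "P (i+j) (grp_comm G (R x) (R y)) =
     P (i+j) (R (grp_comm G (R x) y)) \<otimes>\<^bsub>Q (i+j)\<^esub> P (i+j) (R (grp_comm G x (R y)))
       \<otimes>\<^bsub>Q (i+j)\<^esub> P (i+j) (R (grp_comm G x y))"
proof -
  define n where "n = i + j"
  have n: "1 \<le> n" using i by (simp add: n_def)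
  have xc: "x \<in> carrier G" using Fmem i x .
  have yc: "y \<in> carrier G" using Fmem j y .
  have Rxi: "R x \<in> F i" using R_F i x .
  have Ryj: "R y \<in> F j" using R_F j y .
  have Rx: "R x \<in> carrier G" using R_carr xc .
  have Ry: "R y \<in> carrier G" using R_carr yc .
  define u where "u = x \<otimes> R x \<otimes> y \<otimes> inv (R x)"
  define v where "v = y \<otimes> R y \<otimes> x \<otimes> inv (R y)"
  define c where "c = grp_comm G (R x) (R y)"
  have u: "u \<in> carrier G" and v: "v \<in> carrier G" using xc yc Rx Ry by (auto simp: u_def v_def)
  have cF: "c \<in> F n" unfolding c_def n_def using comm_mem[OF i j Rxi Ryj] .
  have cc: "c \<in> carrier G" using Fmem n cF .
  let ?w = "u \<otimes> c \<otimes> inv v \<otimes> inv c"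
  have w: "?w \<in> carrier G" using u v cc by simp
  have cw: "c = R ?w" unfolding u_def v_def c_def using RB_comm[OF xc yc] by simp
  let ?P = "P n" and ?Q = "Q n"
  have QG: "group ?Q" using Qgrp .
  have "?P ?w = ?P u \<otimes>\<^bsub>?Q\<^esub> ?P c \<otimes>\<^bsub>?Q\<^esub> inv\<^bsub>?Q\<^esub> ?P v \<otimes>\<^bsub>?Q\<^esub> inv\<^bsub>?Q\<^esub> ?P c"
    using u v cc by (simp add: P_mult P_inv)
  also have "\<dots> = ?P u \<otimes>\<^bsub>?Q\<^esub> inv\<^bsub>?Q\<^esub> ?P v"
    by (rule group.GL2[OF QG P_carr[OF u] P_carr[OF v] P_central[OF n cF]])
  also have "?P u = ?P x \<otimes>\<^bsub>?Q\<^esub> ?P (R x) \<otimes>\<^bsub>?Q\<^esub> ?P y \<otimes>\<^bsub>?Q\<^esub> inv\<^bsub>?Q\<^esub> ?P (R x)"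
    unfolding u_def using xc yc Rx by (simp add: P_mult P_inv)
  also have "?P v = ?P y \<otimes>\<^bsub>?Q\<^esub> ?P (R y) \<otimes>\<^bsub>?Q\<^esub> ?P x \<otimes>\<^bsub>?Q\<^esub> inv\<^bsub>?Q\<^esub> ?P (R y)"
    unfolding v_def using xc yc Ry by (simp add: P_mult P_inv)
  also have "(?P x \<otimes>\<^bsub>?Q\<^esub> ?P (R x) \<otimes>\<^bsub>?Q\<^esub> ?P y \<otimes>\<^bsub>?Q\<^esub> inv\<^bsub>?Q\<^esub> ?P (R x)) \<otimes>\<^bsub>?Q\<^esub>
       inv\<^bsub>?Q\<^esub> (?P y \<otimes>\<^bsub>?Q\<^esub> ?P (R y) \<otimes>\<^bsub>?Q\<^esub> ?P x \<otimes>\<^bsub>?Q\<^esub> inv\<^bsub>?Q\<^esub> ?P (R y))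
     = grp_comm ?Q (?P (R x)) (?P y) \<otimes>\<^bsub>?Q\<^esub> grp_comm ?Q (?P x) (?P (R y)) \<otimes>\<^bsub>?Q\<^esub> grp_comm ?Q (?P x) (?P y)"
  proof (rule group.GL3[OF QG P_carr[OF xc] P_carr[OF yc] P_carr[OF Rx] P_carr[OF Ry]])
    show "group.central ?Q (grp_comm ?Q (?P (R x)) (?P y))"
      using P_central[OF n, of "grp_comm G (R x) y"] comm_mem[OF i j Rxi y] P_commG[OF Rx yc]
      by (simp add: n_def)
    show "group.central ?Q (grp_comm ?Q (?P x) (?P (R y)))"
      using P_central[OF n, of "grp_comm G x (R y)"] comm_mem[OF i j x Ryj] P_commG[OF xc Ry]
      by (simp add: n_def)
  qed
  also have "\<dots> = ?P (grp_comm G (R x) y \<otimes> grp_comm G x (R y) \<otimes> grp_comm G x y)"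
    using xc yc Rx Ry by (simp add: P_mult P_commG)
  finally have Pw: "?P ?w = ?P (grp_comm G (R x) y \<otimes> grp_comm G x (R y) \<otimes> grp_comm G x y)" .
  have t1: "grp_comm G (R x) y \<in> F n" unfolding n_def using comm_mem[OF i j Rxi y] .
  have t2: "grp_comm G x (R y) \<in> F n" unfolding n_def using comm_mem[OF i j x Ryj] .
  have t3: "grp_comm G x y \<in> F n" unfolding n_def using comm_mem[OF i j x y] .
  have t1c: "grp_comm G (R x) y \<in> carrier G" using Fmem[OF n t1] .
  have t12c: "grp_comm G (R x) y \<otimes> grp_comm G x (R y) \<in> carrier G" using Fmem[OF n t1] Fmem[OF n t2] by simp
  have tc: "grp_comm G (R x) y \<otimes> grp_comm G x (R y) \<otimes> grp_comm G x y \<in> carrier G"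
    using t12c Fmem[OF n t3] by simp
  have "?P c = ?P (R ?w)" using cw by simp
  also have "\<dots> = ?P (R (grp_comm G (R x) y \<otimes> grp_comm G x (R y) \<otimes> grp_comm G x y))"
    using L1[OF w tc Pw] .
  also have "\<dots> = ?P (R (grp_comm G (R x) y \<otimes> grp_comm G x (R y))) \<otimes>\<^bsub>?Q\<^esub> ?P (R (grp_comm G x y))"
    using L2[OF n t12c t3] .
  also have "?P (R (grp_comm G (R x) y \<otimes> grp_comm G x (R y))) =
      ?P (R (grp_comm G (R x) y)) \<otimes>\<^bsub>?Q\<^esub> ?P (R (grp_comm G x (R y)))"
    using L2[OF n t1c t2] .
  finally show ?thesis by (simp add: c_def n_def)
qed

lemma Tterm:
  assumes i: "1 \<le> i" and j: "1 \<le> j" and x: "x \<in> F i" and x': "x' \<in> F i" and y: "y \<in> F j" and y': "y' \<in> F j"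
    and kx: "x' \<otimes> inv (R x) \<in> F (Suc i)" and ky: "y' \<otimes> inv (R y) \<in> F (Suc j)"
  shows "P (i+j) (grp_comm G x' y') =
     P (i+j) (R (grp_comm G x' y)) \<otimes>\<^bsub>Q (i+j)\<^esub> P (i+j) (R (grp_comm G x y'))
       \<otimes>\<^bsub>Q (i+j)\<^esub> P (i+j) (R (grp_comm G x y))"
proof -
  have xc: "x \<in> carrier G" using Fmem i x .
  have yc: "y \<in> carrier G" using Fmem j y .
  have x'c: "x' \<in> carrier G" using Fmem i x' .
  have y'c: "y' \<in> carrier G" using Fmem j y' .
  have Rxi: "R x \<in> F i" using R_F i x .
  have Ryj: "R y \<in> F j" using R_F j y .
  have Rx: "R x \<in> carrier G" using R_carr xc .
  have Ry: "R y \<in> carrier G" using R_carr yc .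
  have one_i: "y \<otimes> inv y \<in> F (Suc j)" using yc subgroup.one_closed[OF subS] by simp
  have one_x: "x \<otimes> inv x \<in> F (Suc i)" using xc subgroup.one_closed[OF subS] by simp
  have e0: "P (i+j) (grp_comm G x' y') = P (i+j) (grp_comm G (R x) (R y))"
    using L3[OF i j Rxi x' Ryj y' kx ky] .
  have e1: "P (i+j) (grp_comm G x' y) = P (i+j) (grp_comm G (R x) y)"
    using L3[OF i j Rxi x' y y kx one_i] .
  have e2: "P (i+j) (grp_comm G x y') = P (i+j) (grp_comm G x (R y))"
    using L3[OF i j x x Ryj y' one_x ky] .
  have r1: "P (i+j) (R (grp_comm G x' y)) = P (i+j) (R (grp_comm G (R x) y))"
    using L1[OF _ _ e1] x'c yc Rx by simp
  have r2: "P (i+j) (R (grp_comm G x y')) = P (i+j) (R (grp_comm G x (R y)))"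
    using L1[OF _ _ e2] xc y'c Ry by simp
  show ?thesis using e0 r1 r2 L4[OF i j x y] by simp
qed

end


context frb begin

lemma rep_in: "z \<in> carrier G \<Longrightarrow> rep (P n z) \<in> P n z"
  unfolding rep_def P_def using rcos_self[OF _ subS] by (rule someI) 

lemma rep_P: assumes z: "z \<in> carrier G" shows "rep (P n z) \<in> carrier G" "P n (rep (P n z)) = P n z"
proof -
  have r: "rep (P n z) \<in> F (Suc n) #> z" using rep_in[OF z] by (simp add: P_def)
  show "rep (P n z) \<in> carrier G" using subgroup.elemrcos_carrier[OF subS is_group z r] .
  define r0 where "r0 = rep (P n z)"
  have r': "r0 \<in> F (Suc n) #> z" using r by (simp add: r0_def)
  have "P n r0 = P n z" unfolding P_def using repr_independence[OF r' z subS] by simp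
  then show "P n (rep (P n z)) = P n z" by (simp add: r0_def)
qed

lemma rep_PF: assumes n: "1 \<le> n" and z: "z \<in> F n" shows "rep (P n z) \<in> F n"
proof -
  have zc: "z \<in> carrier G" using Fmem n z .
  have r: "rep (P n z) \<in> F (Suc n) #> z" using rep_in[OF zc] by (simp add: P_def)
  have k: "rep (P n z) \<otimes> inv z \<in> F (Suc n)" using subgroup.rcos_module_imp[OF subS is_group zc r] .
  then have k': "rep (P n z) \<otimes> inv z \<in> F n" using monoS[OF n] by blast
  have rc: "rep (P n z) \<in> carrier G" using rep_P(1)[OF zc] .
  have "(rep (P n z) \<otimes> inv z) \<otimes> z \<in> F n" using subgroup.m_closed[OF sub[OF n] k' z] .
  then show ?thesis using rc zc by (simp add: m_assoc)
qed

lemma gr_comp: assumes a: "a \<in> gr G F" and n: "1 \<le> n" shows "\<exists>x\<in>F n. a n = P n x"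
proof -
  have "a n \<in> gr_n G F n" using a n by (simp add: gr_def)
  then show ?thesis unfolding gr_n_def P_def by blast
qed

lemma gr_R_eq: "gr_R G F R a n = P n (R (rep (a n)))"
  unfolding gr_R_def P_def by simp

lemma triv_comp: assumes "a k = F (Suc k)" shows "gr_R G F R a k = F (Suc k)"
proof -
  have "rep (F (Suc k)) \<in> F (Suc k)" unfolding rep_def
    using subgroup.one_closed[OF subS] by (rule someI)
  then have "R (rep (F (Suc k))) \<in> F (Suc k)" using R_FS by blast
  then show ?thesis unfolding gr_R_def using assms subgroup.rcos_const[OF subS is_group] by simp
qed

lemma gr_R_comp: assumes a: "a \<in> gr G F" and n: "1 \<le> n"
  shows "rep (a n) \<in> F n" "R (rep (a n)) \<in> F n" "gr_R G F R a n = P n (R (rep (a n)))"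
    "rep (gr_R G F R a n) \<in> F n" "rep (gr_R G F R a n) \<otimes> inv (R (rep (a n))) \<in> F (Suc n)"
proof -
  obtain x where x: "x \<in> F n" "a n = P n x" using gr_comp[OF a n] by blast
  show r: "rep (a n) \<in> F n" using rep_PF[OF n x(1)] x(2) by simp
  show Rr: "R (rep (a n)) \<in> F n" using R_F[OF n r] .
  show e: "gr_R G F R a n = P n (R (rep (a n)))" by (rule gr_R_eq)
  show "rep (gr_R G F R a n) \<in> F n" using rep_PF[OF n Rr] e by simp
  have Rc: "R (rep (a n)) \<in> carrier G" using Fmem[OF n Rr] .
  have "P n (rep (gr_R G F R a n)) = P n (R (rep (a n)))" using rep_P[OF Rc] e by simp
  then show "rep (gr_R G F R a n) \<otimes> inv (R (rep (a n))) \<in> F (Suc n)"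
    using P_eq_iff rep_P(1)[OF Rc] e Rc by simp
qed

lemma part1: "gr_R G F R \<in> gr G F \<rightarrow> gr G F"
proof
  fix a assume a: "a \<in> gr G F"
  have a0: "a 0 = F 1" using a by (simp add: gr_def)
  have "gr_R G F R a 0 = F (Suc 0)" using triv_comp[of a 0] a0 by simp
  then have g0: "gr_R G F R a 0 = F 1" by simp
  have gn: "\<forall>n\<ge>1. gr_R G F R a n \<in> gr_n G F n"
  proof (intro allI impI)
    fix n :: nat assume n: "1 \<le> n"
    show "gr_R G F R a n \<in> gr_n G F n"
      using gr_R_comp(2,3)[OF a n] unfolding gr_n_def P_def by blast
  qed
  have "{n. gr_R G F R a n \<noteq> F (Suc n)} \<subseteq> {n. a n \<noteq> F (Suc n)}" using triv_comp by blast
  moreover have "finite {n. a n \<noteq> F (Suc n)}" using a by (simp add: gr_def)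
  ultimately have "finite {n. gr_R G F R a n \<noteq> F (Suc n)}" by (rule finite_subset)
  then show "gr_R G F R a \<in> gr G F" using g0 gn by (simp add: gr_def)
qed

end


context frb begin

lemma F1S: "F (Suc 0) = carrier G" using F1 by simp

lemma part2: assumes a: "a \<in> gr G F" and b: "b \<in> gr G F"
  shows "gr_R G F R (gr_add G a b) = gr_add G (gr_R G F R a) (gr_R G F R b)"
proof
  fix n
  show "gr_R G F R (gr_add G a b) n = gr_add G (gr_R G F R a) (gr_R G F R b) n"
  proof (cases "n = 0")
    case True
    have a0: "a 0 = F (Suc 0)" and b0: "b 0 = F (Suc 0)" using a b by (simp_all add: gr_def)
    have ss: "F (Suc 0) <#> F (Suc 0) = F (Suc 0)" using subgroup_mult_id[OF subS] .
    have "gr_add G a b 0 = F (Suc 0)" using a0 b0 ss by (simp add: gr_add_def)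
    then have l: "gr_R G F R (gr_add G a b) 0 = F (Suc 0)" by (rule triv_comp)
    have "gr_R G F R a 0 = F (Suc 0)" "gr_R G F R b 0 = F (Suc 0)" using triv_comp a0 b0 by auto
    then show ?thesis using True l ss by (simp add: gr_add_def)
  next
    case False
    then have n: "1 \<le> n" by simp
    obtain x where x: "x \<in> F n" "a n = P n x" using gr_comp[OF a n] by blast
    obtain y where y: "y \<in> F n" "b n = P n y" using gr_comp[OF b n] by blast
    have xc: "x \<in> carrier G" using Fmem n x(1) .
    have yc: "y \<in> carrier G" using Fmem n y(1) .
    have xyc: "x \<otimes> y \<in> carrier G" using xc yc by simp
    have ab: "gr_add G a b n = P n (x \<otimes> y)" using x y P_mult'[OF xc yc] by (simp add: gr_add_def)
    have "gr_R G F R (gr_add G a b) n = P n (R (rep (P n (x \<otimes> y))))" using ab gr_R_eq by simp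
    also have "\<dots> = P n (R (x \<otimes> y))" using L1[OF rep_P(1)[OF xyc] xyc rep_P(2)[OF xyc]] .
    also have "\<dots> = P n (R x) \<otimes>\<^bsub>Q n\<^esub> P n (R y)" using L2[OF n xc y(1)] .
    also have "\<dots> = P n (R x) <#> P n (R y)" by (simp add: Q_def)
    also have "P n (R x) = gr_R G F R a n"
      using x gr_R_eq L1[OF rep_P(1)[OF xc] xc rep_P(2)[OF xc]] by simp
    also have "P n (R y) = gr_R G F R b n"
      using y gr_R_eq L1[OF rep_P(1)[OF yc] yc rep_P(2)[OF yc]] by simp
    finally show ?thesis by (simp add: gr_add_def)
  qed
qed

lemma part4: "1 \<le> n \<Longrightarrow> gr_R G F R ` gr_deg G F n \<subseteq> gr_deg G F n"
proof
  fix c assume "c \<in> gr_R G F R ` gr_deg G F n"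
  then obtain a where a: "a \<in> gr_deg G F n" "c = gr_R G F R a" by blast
  have ag: "a \<in> gr G F" using a by (simp add: gr_deg_def)
  have "c \<in> gr G F" using part1 ag a(2) by blast
  moreover have "\<forall>k. k \<noteq> n \<longrightarrow> c k = F (Suc k)" using a triv_comp by (simp add: gr_deg_def)
  ultimately show "c \<in> gr_deg G F n" by (simp add: gr_deg_def)
qed

end


context frb begin

lemma foldr_carr: "\<forall>t\<in>set l. t \<in> carrier G \<Longrightarrow> foldr (\<lambda>x y. x \<otimes> y) l \<one> \<in> carrier G"
  by (induction l) auto

lemma foldr_F: "1 \<le> n \<Longrightarrow> \<forall>t\<in>set l. t \<in> F n \<Longrightarrow> foldr (\<lambda>x y. x \<otimes> y) l \<one> \<in> F n"
proof (induction l)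
  case Nil then show ?case using subgroup.one_closed[OF sub] by simp
next
  case (Cons a l) then show ?case using subgroup.m_closed[OF sub[OF Cons.prems(1)]] by simp
qed

lemma P_foldr: "\<forall>t\<in>set l. t \<in> carrier G \<Longrightarrow>
   P n (foldr (\<lambda>x y. x \<otimes> y) l \<one>) = foldr (\<lambda>x y. x \<otimes>\<^bsub>Q n\<^esub> y) (map (P n) l) \<one>\<^bsub>Q n\<^esub>"
proof (induction l)
  case Nil then show ?case using P_one by simp
next
  case (Cons a l) then show ?case using P_mult foldr_carr by simp
qed

lemma PR_foldr: "1 \<le> n \<Longrightarrow> \<forall>t\<in>set l. t \<in> F n \<Longrightarrow>
   P n (R (foldr (\<lambda>x y. x \<otimes> y) l \<one>)) = foldr (\<lambda>x y. x \<otimes>\<^bsub>Q n\<^esub> y) (map (\<lambda>t. P n (R t)) l) \<one>\<^bsub>Q n\<^esub>"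
proof (induction l)
  case Nil then show ?case using P_one R_one by simp
next
  case (Cons a l)
  have ac: "a \<in> carrier G" using Cons.prems Fmem by simp
  have fl: "foldr (\<lambda>x y. x \<otimes> y) l \<one> \<in> F n" using foldr_F Cons.prems by simp
  have "P n (R (a \<otimes> foldr (\<lambda>x y. x \<otimes> y) l \<one>)) = P n (R a) \<otimes>\<^bsub>Q n\<^esub> P n (R (foldr (\<lambda>x y. x \<otimes> y) l \<one>))"
    using L2[OF Cons.prems(1) ac fl] .
  then show ?case using Cons by simp
qed

lemma part3n:
  assumes a: "a \<in> gr G F" and b: "b \<in> gr G F" and n: "1 \<le> n"
  shows "gr_bracket G F (gr_R G F R a) (gr_R G F R b) n =
           gr_R G F R (gr_add G (gr_add G (gr_bracket G F (gr_R G F R a) b)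
                                          (gr_bracket G F a (gr_R G F R b)))
                                (gr_bracket G F a b)) n"
proof -
  let ?ra = "gr_R G F R a" and ?rb = "gr_R G F R b"
  let ?l = "[1..<n]"
  define L where "L i = grp_comm G (rep (?ra i)) (rep (?rb (n - i)))" for i
  define T1 where "T1 i = grp_comm G (rep (?ra i)) (rep (b (n - i)))" for i
  define T2 where "T2 i = grp_comm G (rep (a i)) (rep (?rb (n - i)))" for i
  define T3 where "T3 i = grp_comm G (rep (a i)) (rep (b (n - i)))" for i
  define f1 where "f1 i = P n (R (T1 i))" for i
  define f2 where "f2 i = P n (R (T2 i))" for i
  define f3 where "f3 i = P n (R (T3 i))" for i
  let ?fQ = "\<lambda>l. foldr (\<lambda>x y. x \<otimes>\<^bsub>Q n\<^esub> y) l \<one>\<^bsub>Q n\<^esub>"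
  let ?fG = "\<lambda>l. foldr (\<lambda>x y. x \<otimes> y) l \<one>"
  have mem: "L i \<in> F n \<and> T1 i \<in> F n \<and> T2 i \<in> F n \<and> T3 i \<in> F n \<and>
      P n (L i) = f1 i \<otimes>\<^bsub>Q n\<^esub> f2 i \<otimes>\<^bsub>Q n\<^esub> f3 i" if i: "i \<in> set ?l" for i
  proof -
    have i1: "1 \<le> i" and j1: "1 \<le> n - i" and ij: "i + (n - i) = n" using i by auto
    note A = gr_R_comp[OF a i1] and B = gr_R_comp[OF b j1]
    have "L i \<in> F (i + (n - i))" unfolding L_def using comm_mem[OF i1 j1 A(4) B(4)] .
    moreover have "T1 i \<in> F (i + (n - i))" unfolding T1_def using comm_mem[OF i1 j1 A(4) B(1)] .
    moreover have "T2 i \<in> F (i + (n - i))" unfolding T2_def using comm_mem[OF i1 j1 A(1) B(4)] .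
    moreover have "T3 i \<in> F (i + (n - i))" unfolding T3_def using comm_mem[OF i1 j1 A(1) B(1)] .
    moreover have "P (i + (n - i)) (L i) = P (i + (n - i)) (R (T1 i)) \<otimes>\<^bsub>Q (i + (n - i))\<^esub>
        P (i + (n - i)) (R (T2 i)) \<otimes>\<^bsub>Q (i + (n - i))\<^esub> P (i + (n - i)) (R (T3 i))"
      unfolding L_def T1_def T2_def T3_def using Tterm[OF i1 j1 A(1) A(4) B(1) B(4) A(5) B(5)] .
    ultimately show ?thesis unfolding f1_def f2_def f3_def using ij by simp
  qed
  have Lc: "\<forall>t\<in>set (map L ?l). t \<in> carrier G" using mem Fmem[OF n] by auto
  have "gr_bracket G F ?ra ?rb n = P n (?fG (map L ?l))"
    unfolding gr_bracket_def P_def L_def by simp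
  also have "\<dots> = ?fQ (map (P n) (map L ?l))" using P_foldr[OF Lc] .
  also have "map (P n) (map L ?l) = map (\<lambda>i. f1 i \<otimes>\<^bsub>Q n\<^esub> f2 i \<otimes>\<^bsub>Q n\<^esub> f3 i) ?l"
    using mem by simp
  also have "?fQ \<dots> = ?fQ (map f1 ?l) \<otimes>\<^bsub>Q n\<^esub> ?fQ (map f2 ?l) \<otimes>\<^bsub>Q n\<^esub> ?fQ (map f3 ?l)"
  proof (rule group.GL4[OF Qgrp], intro ballI conjI)
    fix i assume i: "i \<in> set ?l"
    have t: "R (T1 i) \<in> F n" "R (T2 i) \<in> F n" "R (T3 i) \<in> F n" using mem[OF i] R_F[OF n] by auto
    show "f1 i \<in> carrier (Q n)" unfolding f1_def using P_carr Fmem[OF n t(1)] .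
    show "group.central (Q n) (f2 i)" unfolding f2_def using P_central[OF n t(2)] .
    show "group.central (Q n) (f3 i)" unfolding f3_def using P_central[OF n t(3)] .
  qed
  finally have lhs: "gr_bracket G F ?ra ?rb n =
     ?fQ (map f1 ?l) \<otimes>\<^bsub>Q n\<^esub> ?fQ (map f2 ?l) \<otimes>\<^bsub>Q n\<^esub> ?fQ (map f3 ?l)" .
  define p1 where "p1 = ?fG (map T1 ?l)"
  define p2 where "p2 = ?fG (map T2 ?l)"
  define p3 where "p3 = ?fG (map T3 ?l)"
  have p1: "p1 \<in> F n" unfolding p1_def using foldr_F[OF n] mem by auto
  have p2: "p2 \<in> F n" unfolding p2_def using foldr_F[OF n] mem by auto
  have p3: "p3 \<in> F n" unfolding p3_def using foldr_F[OF n] mem by auto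
  have p1c: "p1 \<in> carrier G" using Fmem[OF n p1] .
  have p2c: "p2 \<in> carrier G" using Fmem[OF n p2] .
  have p3c: "p3 \<in> carrier G" using Fmem[OF n p3] .
  have p12: "p1 \<otimes> p2 \<in> carrier G" using p1c p2c by simp
  have pc: "p1 \<otimes> p2 \<otimes> p3 \<in> carrier G" using p12 p3c by simp
  have B1: "gr_bracket G F ?ra b n = P n p1" unfolding gr_bracket_def P_def p1_def T1_def by simp
  have B2: "gr_bracket G F a ?rb n = P n p2" unfolding gr_bracket_def P_def p2_def T2_def by simp
  have B3: "gr_bracket G F a b n = P n p3" unfolding gr_bracket_def P_def p3_def T3_def by simp
  have "gr_add G (gr_add G (gr_bracket G F ?ra b) (gr_bracket G F a ?rb)) (gr_bracket G F a b) n
      = P n (p1 \<otimes> p2 \<otimes> p3)"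
    unfolding gr_add_def B1 B2 B3 using P_mult'[OF p1c p2c] P_mult'[OF p12 p3c] by simp
  then have "gr_R G F R (gr_add G (gr_add G (gr_bracket G F ?ra b) (gr_bracket G F a ?rb)) (gr_bracket G F a b)) n
      = P n (R (rep (P n (p1 \<otimes> p2 \<otimes> p3))))" using gr_R_eq by simp
  also have "\<dots> = P n (R (p1 \<otimes> p2 \<otimes> p3))" using L1[OF rep_P(1)[OF pc] pc rep_P(2)[OF pc]] .
  also have "\<dots> = P n (R (p1 \<otimes> p2)) \<otimes>\<^bsub>Q n\<^esub> P n (R p3)" using L2[OF n p12 p3] .
  also have "P n (R (p1 \<otimes> p2)) = P n (R p1) \<otimes>\<^bsub>Q n\<^esub> P n (R p2)" using L2[OF n p1c p2] .
  also have "P n (R p1) = ?fQ (map f1 ?l)"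
    unfolding p1_def f1_def using PR_foldr[OF n, of "map T1 ?l"] mem by (simp add: o_def)
  also have "P n (R p2) = ?fQ (map f2 ?l)"
    unfolding p2_def f2_def using PR_foldr[OF n, of "map T2 ?l"] mem by (simp add: o_def)
  also have "P n (R p3) = ?fQ (map f3 ?l)"
    unfolding p3_def f3_def using PR_foldr[OF n, of "map T3 ?l"] mem by (simp add: o_def)
  finally show ?thesis using lhs by simp
qed

end


context frb begin

lemma part3: assumes a: "a \<in> gr G F" and b: "b \<in> gr G F"
  shows "gr_bracket G F (gr_R G F R a) (gr_R G F R b) =
           gr_R G F R (gr_add G (gr_add G (gr_bracket G F (gr_R G F R a) b)
                                          (gr_bracket G F a (gr_R G F R b)))
                                (gr_bracket G F a b))"
proof
  fix n
  show "gr_bracket G F (gr_R G F R a) (gr_R G F R b) n =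
           gr_R G F R (gr_add G (gr_add G (gr_bracket G F (gr_R G F R a) b)
                                          (gr_bracket G F a (gr_R G F R b)))
                                (gr_bracket G F a b)) n"
  proof (cases "n = 0")
    case True
    have z: "\<And>a b. gr_bracket G F a b 0 = F (Suc 0)"
      unfolding gr_bracket_def using coset_mult_one[OF FsubS] by simp
    have ss: "F (Suc 0) <#> F (Suc 0) = F (Suc 0)" using subgroup_mult_id[OF subS] .
    have "gr_add G (gr_add G (gr_bracket G F (gr_R G F R a) b)
                                          (gr_bracket G F a (gr_R G F R b)))
                                (gr_bracket G F a b) 0 = F (Suc 0)"
      unfolding gr_add_def z ss by simp
    then show ?thesis using True z triv_comp by simp
  next
    case False
    then show ?thesis using part3n[OF a b] by simp
  qed
qed

end

theorem theorem5p11: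
  fixes G :: "('a, 'b) monoid_scheme" and F :: "nat \<Rightarrow> 'a set" and R :: "'a \<Rightarrow> 'a"
  assumes "filtered_rota_baxter G F R"
  shows "gr_R G F R \<in> gr G F \<rightarrow> gr G F \<and>
     (\<forall>a\<in>gr G F. \<forall>b\<in>gr G F.
           gr_R G F R (gr_add G a b) = gr_add G (gr_R G F R a) (gr_R G F R b)) \<and>
     (\<forall>a\<in>gr G F. \<forall>b\<in>gr G F.
           gr_bracket G F (gr_R G F R a) (gr_R G F R b) =
           gr_R G F R (gr_add G (gr_add G (gr_bracket G F (gr_R G F R a) b)
                                          (gr_bracket G F a (gr_R G F R b)))
                                (gr_bracket G F a b))) \<and>
     (\<forall>n\<ge>1. gr_R G F R ` gr_deg G F n \<subseteq> gr_deg G F n)"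
proof -
  have "group G" using assms by (simp add: filtered_rota_baxter_def filtered_group_def)
  then interpret frb G F R using assms by (simp add: frb_def frb_axioms_def)
  show ?thesis using part1 part2 part3 part4 by blast
qed



end
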